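(* Let $n_1,n_2,n_3$ be integers and $\ell$ a positive integer with $n_1^2+n_2^2+n_3^2=\ell^2$. If $P=(x,y,z)\in\mathbb{Z}^3$ satisfies $n_1x+n_2y+n_3z=0$, then $x^2+y^2+z^2$ is a sum of two squares of integers. *)

theory Defs
  imports Main
begin

end

theory Submission
  imports Defs
begin

lemma base_case:
  fixes n1 n2 n3 x y z w l :: int
  assumes "l > 0" "n1^2 + n2^2 + n3^2 = l^2" "n1*x+n2*y+n3*z = l*w"
    and "n2 = 0" "n3 = 0"
  shows "\<exists>a b. x^2+y^2+z^2-w^2 = a^2+b^2"
proof -
  have "n1^2 = l^2" using assms by simp
  hence "n1 = l \<or> n1 = -l" by (metis power2_eq_iff)
  hence "l*w = l*x \<or> l*w = l*(-x)" using assms by auto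
  hence "w = x \<or> w = -x" using assms(1) by (metis less_irrefl mult_cancel_left)
  hence "x^2+y^2+z^2-w^2 = y^2+z^2" by auto
  thus ?thesis by blast
qed

lemma key:
  fixes L :: nat
  shows "\<And>n1 n2 n3 x y z w :: int. int L > 0 \<Longrightarrow> n1^2+n2^2+n3^2 = (int L)^2 \<Longrightarrow>
     n1*x+n2*y+n3*z = int L*w \<Longrightarrow> \<exists>a b. x^2+y^2+z^2-w^2 = a^2+b^2"
proof (induction L rule: less_induct)
  case (less L n1 n2 n3 x y z w)
  define l where "l = int L"
  define s1 :: int where "s1 = (if n1 \<ge> 0 then 1 else -1)"
  define s2 :: int where "s2 = (if n2 \<ge> 0 then 1 else -1)"
  define s3 :: int where "s3 = (if n3 \<ge> 0 then 1 else -1)"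
  have a1: "s1*n1 = \<bar>n1\<bar>" "s2*n2 = \<bar>n2\<bar>" "s3*n3 = \<bar>n3\<bar>"
    by (auto simp: s1_def s2_def s3_def)
  have sq: "s1^2 = 1" "s2^2 = 1" "s3^2 = 1" by (auto simp: s1_def s2_def s3_def)
  define k where "k = \<bar>n1\<bar>+\<bar>n2\<bar>+\<bar>n3\<bar> - l"
  have N: "\<bar>n1\<bar>^2+\<bar>n2\<bar>^2+\<bar>n3\<bar>^2 = l^2" using less.prems l_def by simp
  have lpos: "l > 0" using less.prems l_def by simp
  have k0: "k \<ge> 0"
  proof -
    have "0 \<le> \<bar>n1\<bar>*\<bar>n2\<bar>" "0 \<le> \<bar>n1\<bar>*\<bar>n3\<bar>" "0 \<le> \<bar>n2\<bar>*\<bar>n3\<bar>" by auto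
    moreover have "(\<bar>n1\<bar>+\<bar>n2\<bar>+\<bar>n3\<bar>)^2 = l^2 + 2*(\<bar>n1\<bar>*\<bar>n2\<bar>+\<bar>n1\<bar>*\<bar>n3\<bar>+\<bar>n2\<bar>*\<bar>n3\<bar>)"
      using N by (simp add: power2_eq_square algebra_simps)
    ultimately have "l^2 \<le> (\<bar>n1\<bar>+\<bar>n2\<bar>+\<bar>n3\<bar>)^2" by simp
    hence "l \<le> \<bar>n1\<bar>+\<bar>n2\<bar>+\<bar>n3\<bar>" by (rule power2_le_imp_le) simp
    thus ?thesis unfolding k_def by simp
  qed
  show ?case
  proof (cases "k = 0")
    case True
    have "\<bar>n1\<bar>*\<bar>n2\<bar> + \<bar>n1\<bar>*\<bar>n3\<bar> + \<bar>n2\<bar>*\<bar>n3\<bar> = 0"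
    proof -
      have "(\<bar>n1\<bar>+\<bar>n2\<bar>+\<bar>n3\<bar>)^2 = l^2" using True k_def by simp
      thus ?thesis using N by (simp add: power2_eq_square algebra_simps)
    qed
    hence z: "\<bar>n1\<bar>*\<bar>n2\<bar> = 0" "\<bar>n1\<bar>*\<bar>n3\<bar> = 0" "\<bar>n2\<bar>*\<bar>n3\<bar> = 0"
      by (smt (verit) abs_ge_zero mult_nonneg_nonneg)+
    have P: "n1^2+n2^2+n3^2 = l^2" "n1*x+n2*y+n3*z = l*w"
      using less.prems l_def by auto
    consider "n2 = 0" "n3 = 0" | "n1 = 0" "n3 = 0" | "n1 = 0" "n2 = 0"
      using z by auto
    thus ?thesis
    proof cases
      case 1 thus ?thesis using base_case[OF lpos P] by blast
    next
      case 2
      have "n2^2 + n1^2 + n3^2 = l^2" "n2*y+n1*x+n3*z = l*w" using P by auto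
      from base_case[OF lpos this 2] obtain a b where "y^2+x^2+z^2-w^2 = a^2+b^2" by blast
      hence "x^2+y^2+z^2-w^2 = a^2+b^2" by simp
      thus ?thesis by blast
    next
      case 3
      have "n3^2 + n2^2 + n1^2 = l^2" "n3*z+n2*y+n1*x = l*w" using P by auto
      from base_case[OF lpos this 3(2) 3(1)] obtain a b where "z^2+y^2+x^2-w^2 = a^2+b^2" by blast
      hence "x^2+y^2+z^2-w^2 = a^2+b^2" by simp
      thus ?thesis by blast
    qed
  next
    case False
    hence kpos: "k > 0" using k0 by simp
    have lt2: "\<bar>n1\<bar>+\<bar>n2\<bar>+\<bar>n3\<bar> < 2*l"
    proof -
      have "3*l^2 - (\<bar>n1\<bar>+\<bar>n2\<bar>+\<bar>n3\<bar>)^2 = (\<bar>n1\<bar>-\<bar>n2\<bar>)^2 + (\<bar>n1\<bar>-\<bar>n3\<bar>)^2 + (\<bar>n2\<bar>-\<bar>n3\<bar>)^2"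
        unfolding N[symmetric] by (simp add: power2_eq_square algebra_simps)
      moreover have "0 \<le> (\<bar>n1\<bar>-\<bar>n2\<bar>)^2 + (\<bar>n1\<bar>-\<bar>n3\<bar>)^2 + (\<bar>n2\<bar>-\<bar>n3\<bar>)^2" by simp
      ultimately have "(\<bar>n1\<bar>+\<bar>n2\<bar>+\<bar>n3\<bar>)^2 \<le> 3*l^2" by linarith
      also have "\<dots> < (2*l)^2" using lpos by (simp add: power2_eq_square)
      finally have "(\<bar>n1\<bar>+\<bar>n2\<bar>+\<bar>n3\<bar>)^2 < (2*l)^2" .
      from power_less_imp_less_base[OF this] show ?thesis using lpos by simp
    qed
    define l' where "l' = l - k"
    have l'pos: "l' > 0" "l' < l" using lt2 kpos l'_def k_def by auto
    define L' where "L' = nat l'"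
    have L'lt: "L' < L" and L'eq: "int L' = l'" using l'pos l_def L'_def by auto
    define m where "m = s1*x + s2*y + s3*z - w"
    define n1' where "n1' = n1 - k*s1"
    define n2' where "n2' = n2 - k*s2"
    define n3' where "n3' = n3 - k*s3"
    define x' where "x' = x - m*s1"
    define y' where "y' = y - m*s2"
    define z' where "z' = z - m*s3"
    define w' where "w' = w - m"
    have kk: "k = s1*n1+s2*n2+s3*n3 - l" using a1 k_def by simp
    have E: "n1*x+n2*y+n3*z = l*w" using less.prems l_def by simp
    have N0: "n1^2+n2^2+n3^2 = l^2" using less.prems l_def by simp
    have S: "s1^2+s2^2+s3^2 = 3" using sq by simp
    have e1: "n1'^2+n2'^2+n3'^2 = l'^2"
    proof -
      have "n1'^2+n2'^2+n3'^2 = (n1^2+n2^2+n3^2) + k^2*(s1^2+s2^2+s3^2) - 2*k*(s1*n1+s2*n2+s3*n3)"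
        unfolding n1'_def n2'_def n3'_def by (simp add: power2_eq_square algebra_simps)
      also have "\<dots> = l^2 + 3*k^2 - 2*k*(k+l)" using N0 S kk by simp
      also have "\<dots> = l'^2" unfolding l'_def by (simp add: power2_eq_square algebra_simps)
      finally show ?thesis .
    qed
    have e2: "n1'*x'+n2'*y'+n3'*z' = l'*w'"
    proof -
      have "n1'*x'+n2'*y'+n3'*z' - l'*w' = (n1*x+n2*y+n3*z - l*w) - m*(s1*n1+s2*n2+s3*n3)
          - k*(s1*x+s2*y+s3*z) + k*m*(s1^2+s2^2+s3^2) + l*m + k*w - k*m"
        unfolding n1'_def n2'_def n3'_def x'_def y'_def z'_def w'_def l'_def
        by (simp add: power2_eq_square algebra_simps)
      also have "\<dots> = 0 - m*(k+l) - k*(m+w) + k*m*3 + l*m + k*w - k*m"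
        using E S kk m_def by simp
      also have "\<dots> = 0" by (simp add: algebra_simps)
      finally show ?thesis by simp
    qed
    have e3: "x'^2+y'^2+z'^2-w'^2 = x^2+y^2+z^2-w^2"
    proof -
      have "x'^2+y'^2+z'^2-w'^2 = (x^2+y^2+z^2-w^2) + m^2*(s1^2+s2^2+s3^2-1) - 2*m*(s1*x+s2*y+s3*z-w)"
        unfolding x'_def y'_def z'_def w'_def by (simp add: power2_eq_square algebra_simps)
      also have "\<dots> = x^2+y^2+z^2-w^2" using S m_def by (simp add: power2_eq_square)
      finally show ?thesis .
    qed
    from less.IH[OF L'lt, of n1' n2' n3' x' y' z' w'] e1 e2 L'eq l'pos
    obtain a b where "x'^2+y'^2+z'^2-w'^2 = a^2+b^2" by auto
    thus ?thesis using e3 by auto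
  qed
qed

theorem corollary2p6:
  fixes n1 n2 n3 x y z :: int and l :: nat
  assumes "l > 0"
    and "n1^2 + n2^2 + n3^2 = (int l)^2"
    and "n1 * x + n2 * y + n3 * z = 0"
  shows "\<exists>a b :: int. x^2 + y^2 + z^2 = a^2 + b^2"
  using key[of l n1 n2 n3 x y z 0] assms by simp

end
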